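(* Let $\mathcal{T}:\mathrm{Cvx}(\mathbb{R}^n)\to\mathrm{Cvx}(\mathbb{R}^n)$ satisfy: (1) $\phi\le\psi$ iff $\mathcal{T}\phi\le\mathcal{T}\psi$; (2) $\mathcal{T}\phi=\phi$ for every positively homogeneous $\phi\in\mathrm{Cvx}(\mathbb{R}^n)$; (3) whenever $\phi',\psi'\in\mathrm{Im}\,\mathcal{T}$ and $\phi'+\psi'$ is finite at some point, $\phi'+\psi'\in\mathrm{Im}\,\mathcal{T}$. Then there exists $\gamma>0$ such that for every $a\in\mathbb{R}^n$ and $c\in\mathbb{R}$, $\mathcal{T}$ maps the affine function $x\mapsto\langle x,a\rangle+c$ to the affine function $x\mapsto\langle x,a\rangle+\gamma c$. In particular every affine function lies in $\mathrm{Im}\,\mathcal{T}$.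
   Context: $\mathrm{Cvx}(\mathbb{R}^n)$ denotes the set of functions $\phi:\mathbb{R}^n\to(-\infty,\infty]$ that are convex, lower semicontinuous, and finite at at least one point; $\mathrm{Im}\,\mathcal{T}=\{\mathcal{T}\phi:\phi\in\mathrm{Cvx}(\mathbb{R}^n)\}$. Positively homogeneous means $\phi(\lambda x)=\lambda\phi(x)$ for all $x$ and $\lambda>0$. *)

theory Defs
  imports "HOL-Analysis.Analysis" "HOL-Library.Extended_Real"
begin

text \<open>Functions R^n -> (-inf, +inf], encoded as ereal-valued functions never equal to -infinity.\<close>

definition epi :: "('a::real_normed_vector \<Rightarrow> ereal) \<Rightarrow> ('a \<times> real) set" where
  "epi \<phi> = {(x, t). \<phi> x \<le> ereal t}"

definition Cvx :: "(real^'n \<Rightarrow> ereal) set" where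
  "Cvx = {\<phi>. (\<forall>x. \<phi> x \<noteq> -\<infinity>) \<and> convex (epi \<phi>) \<and> closed (epi \<phi>)
              \<and> (\<exists>x. \<phi> x \<noteq> \<infinity>)}"

definition pos_homogeneous :: "('a::real_vector \<Rightarrow> ereal) \<Rightarrow> bool" where
  "pos_homogeneous \<phi> \<longleftrightarrow> (\<forall>x. \<forall>t::real. t > 0 \<longrightarrow> \<phi> (t *\<^sub>R x) = ereal t * \<phi> x)"

definition ImT :: "((real^'n \<Rightarrow> ereal) \<Rightarrow> (real^'n \<Rightarrow> ereal)) \<Rightarrow> (real^'n \<Rightarrow> ereal) set" where
  "ImT T = T ` Cvx"

end

theory Submission
  imports Defs
begin


lemma concave_from_W:
  fixes g :: "real \<Rightarrow> real"
  assumes mono: "\<And>x y. x < y \<Longrightarrow> g x < g y"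
    and W: "\<And>c1 c2 \<theta> k. 0 \<le> \<theta> \<Longrightarrow> \<theta> \<le> 1 \<Longrightarrow> g k \<le> (1-\<theta>)*g c1 + \<theta>*g c2 \<Longrightarrow> k \<le> (1-\<theta>)*c1 + \<theta>*c2"
    and th: "0 \<le> \<theta>" "\<theta> \<le> 1"
  shows "(1-\<theta>)*g c1 + \<theta>*g c2 \<le> g((1-\<theta>)*c1 + \<theta>*c2)"
proof (rule ccontr)
  define m where "m = (1-\<theta>)*c1 + \<theta>*c2"
  define x where "x = (1-\<theta>)*g c1 + \<theta>*g c2"
  assume "\<not> ?thesis"
  hence gm: "g m < x" unfolding m_def x_def by simp
  define D where "D = x - g m"
  have D: "D > 0" using gm D_def by simp
  have P: "g k > x" if "k > m" for k
  proof (rule ccontr)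
    assume "\<not> g k > x"
    hence "k \<le> m" using W[OF th] unfolding m_def x_def by (simp add: not_less)
    thus False using that by simp
  qed
  define q where "q = g m - g (m-1)"
  have q: "q > 0" using mono[of "m-1" m] q_def by simp
  define k' where "k' = m + D/q/2"
  have k'm: "k' > m" using D q k'_def by simp
  have gk': "g k' > x" using P k'm by simp
  define th' where "th' = q / (g k' - g (m-1))"
  have den: "g k' - g (m-1) > q" using gk' gm q_def by simp
  have th'0: "0 \<le> th'" and th'1: "th' \<le> 1" using den q th'_def by auto
  have "th' * (g k' - g (m-1)) = q" using den q unfolding th'_def by simp
  hence eq: "(1-th')*g (m-1) + th'*g k' = g m"
    unfolding q_def by (simp add: algebra_simps)
  have "m \<le> (1-th')*(m-1) + th'*k'"
    using W[OF th'0 th'1, of m "m-1" k'] eq by simp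
  hence "1 \<le> th' * (k' - m + 1)" by (simp add: algebra_simps)
  hence "1 \<le> q * (D/q/2 + 1) / (g k' - g (m-1))" unfolding th'_def k'_def by simp
  hence "g k' - g (m-1) \<le> q * (D/q/2 + 1)" using den q by (simp add: field_simps)
  moreover have "q * (D/q/2 + 1) = D/2 + q" using q by (simp add: field_simps)
  ultimately have "g k' - g (m-1) \<le> D/2 + q" by simp
  thus False using gk' gm D_def q_def by linarith
qed

lemma affine_formula:
  fixes g :: "real \<Rightarrow> real"
  assumes A: "\<And>s t \<theta>. 0 \<le> \<theta> \<Longrightarrow> \<theta> \<le> 1 \<Longrightarrow> g((1-\<theta>) * s + \<theta>*t) = (1-\<theta>)*g s + \<theta>*g t"
  shows "g t = g 0 + t*(g 1 - g 0)"
proof -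
  consider "0 \<le> t" "t \<le> 1" | "t > 1" | "t < 0" by linarith
  thus ?thesis
  proof cases
    case 1 then show ?thesis using A[of t 0 1] by (simp add: algebra_simps)
  next
    case 2
    have "g 1 = (1 - 1/t)*g 0 + (1/t)*g t"
      using A[of "1/t" 0 t] 2 by simp
    then show ?thesis using 2 by (simp add: field_simps)
  next
    case 3
    have t1: "1 - t \<noteq> 0" using 3 by simp
    have "0 \<le> 1/(1-t)" "1/(1-t) \<le> 1" using 3 by auto
    from A[OF this, of 1 t] have e: "g 0 = (1 - 1/(1-t))*g 1 + (1/(1-t))*g t"
      using t1 by (simp add: field_simps)
    have "(1 - 1/(1-t)) = -t/(1-t)" using t1 by (simp add: field_simps)
    with e have "g 0 = (-t * g 1 + g t)/(1-t)" by (simp add: diff_divide_distrib)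
    hence "g 0 * (1-t) = -t * g 1 + g t" using t1 by simp
    then show ?thesis by (simp add: algebra_simps)
  qed
qed

lemma concave_additive_linear:
  fixes g :: "real \<Rightarrow> real"
  assumes conc: "\<And>s t \<theta>. 0 \<le> \<theta> \<Longrightarrow> \<theta> \<le> 1 \<Longrightarrow> (1-\<theta>)*g s + \<theta>*g t \<le> g((1-\<theta>) * s + \<theta>*t)"
    and add: "\<And>x y. g (x + y) = g x + g y"
  shows "g c = g 1 * c"
proof -
  have g0: "g 0 = 0" using add[of 0 0] by simp
  have odd: "g (-x) = - g x" for x using add[of x "-x"] g0 by simp
  have sc: "g (t*x) = t * g x" if "0 \<le> t" "t \<le> 1" for t x
  proof -
    have a: "t * g x \<le> g (t*x)" using conc[of t 0 x] that g0 by simp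
    have b: "t * g (-x) \<le> g (t*(-x))" using conc[of t 0 "-x"] that g0 by simp
    from a b show ?thesis using odd[of x] odd[of "t*x"] by simp
  qed
  consider "0 \<le> c" "c \<le> 1" | "c > 1" | "c < 0" by linarith
  thus ?thesis
  proof cases
    case 1 then show ?thesis using sc[of c 1] by simp
  next
    case 2 then have "g 1 = (1/c) * g c" using sc[of "1/c" c] by simp
    then show ?thesis using 2 by (simp add: field_simps)
  next
    case 3
    have "g (-c) = g 1 * (-c)"
    proof (cases "-c \<le> 1")
      case True then show ?thesis using sc[of "-c" 1] 3 by simp
    next
      case False
      have "0 \<le> 1/(-c)" "1/(-c) \<le> 1" using False by (auto simp: field_simps)
      from sc[OF this, of "-c"] have "g 1 = (1/(-c)) * g (-c)" using 3 by simp
      then show ?thesis using 3 by (simp add: field_simps)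
    qed
    then show ?thesis using odd[of c] by simp
  qed
qed



lemma convex_bounded_const:
  fixes k :: "'a::real_vector \<Rightarrow> real"
  assumes conv: "\<And>x y u. 0 \<le> u \<Longrightarrow> u \<le> 1 \<Longrightarrow> k ((1-u) *\<^sub>R x + u *\<^sub>R y) \<le> (1-u) * k x + u * k y"
    and bnd: "\<And>x. k x \<le> M"
  shows "k x \<le> k y"
proof (rule ccontr)
  assume "\<not> k x \<le> k y"
  hence lt: "k y < k x" by simp
  define t where "t = (M - k x)/(k x - k y) + 1"
  have t0: "t \<ge> 0" using lt bnd[of x] unfolding t_def by simp
  define z where "z = x + t *\<^sub>R (x - y)"
  define u where "u = t/(1+t)"
  have u0: "0 \<le> u" "u \<le> 1" using t0 unfolding u_def by auto
  have "(1-u) *\<^sub>R z + u *\<^sub>R y = x"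
  proof -
    have ut: "(1-u)*t = u" using t0 unfolding u_def by (simp add: field_simps)
    have "(1-u) *\<^sub>R z = (1-u) *\<^sub>R x + ((1-u)*t) *\<^sub>R (x - y)"
      unfolding z_def by (simp add: scaleR_add_right)
    hence "(1-u) *\<^sub>R z = (1-u) *\<^sub>R x + u *\<^sub>R (x - y)" using ut by simp
    thus ?thesis by (simp add: algebra_simps)
  qed
  hence "k x \<le> (1-u) * k z + u * k y" using conv[OF u0, of z y] by simp
  hence "(1+t) * k x \<le> (1+t) * ((1-u) * k z + u * k y)" using t0 by (simp add: mult_left_mono)
  moreover have "(1+t) * ((1-u) * k z + u * k y) = k z + t * k y"
  proof -
    have h1: "(1+t)*(1-u) = 1" using t0 unfolding u_def by (simp add: field_simps)
    have h2: "(1+t)*u = t" using t0 unfolding u_def by (simp add: field_simps)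
    have "(1+t) * ((1-u) * k z + u * k y) = ((1+t)*(1-u)) * k z + ((1+t)*u) * k y"
      by (simp add: algebra_simps)
    thus ?thesis using h1 h2 by simp
  qed
  ultimately have "(1+t) * k x \<le> k z + t * k y" by simp
  hence "k z \<ge> k x + t * (k x - k y)" by (simp add: algebra_simps)
  moreover have "t * (k x - k y) = M - k x + (k x - k y)" using lt unfolding t_def by (simp add: field_simps)
  ultimately have "k z > M" using lt by simp
  thus False using bnd[of z] by simp
qed

definition aff :: "real^'n \<Rightarrow> real \<Rightarrow> real^'n \<Rightarrow> ereal" where
  "aff a c = (\<lambda>x. ereal (x \<bullet> a + c))"

lemma halfsp: "{p :: (real^'n) \<times> real. fst p \<bullet> a + c \<le> snd p} = {p. inner (a, -1::real) p \<le> -c}"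
  by (auto simp: inner_Pair_0 inner_commute)

lemma max_aff_Cvx: "(\<lambda>x. max (aff a c x) (aff b d x)) \<in> Cvx"
proof -
  let ?f = "(\<lambda>x. max (aff a c x) (aff b d x))"
  have e: "epi ?f = {p. fst p \<bullet> a + c \<le> snd p} \<inter> {p. fst p \<bullet> b + d \<le> snd p}"
    unfolding epi_def aff_def by auto
  show ?thesis unfolding Cvx_def
    apply (intro CollectI conjI)
    subgoal by (simp add: aff_def max_def)
    subgoal unfolding e halfsp by (intro convex_Int convex_halfspace_le)
    subgoal unfolding e halfsp by (intro closed_Int closed_halfspace_le)
    subgoal by (simp add: aff_def max_def)
    done
qed

lemma aff_Cvx: "aff a c \<in> Cvx"
  using max_aff_Cvx[of a c a c] by simp

lemma aff_le_iff: "aff a c \<le> aff a c' \<longleftrightarrow> c \<le> c'"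
  unfolding aff_def le_fun_def by (auto dest: spec[of _ 0])

lemma aff_eq_iff: "aff a c = aff a c' \<longleftrightarrow> c = c'"
  by (metis aff_le_iff order_antisym order_refl)

lemma Cvx_finite_below: "\<phi> \<in> Cvx \<Longrightarrow> \<phi> x \<noteq> -\<infinity>" by (simp add: Cvx_def)

lemma Cvx_le_aff:
  assumes C: "\<phi> \<in> Cvx" and le: "\<And>x. \<phi> x \<le> ereal (x \<bullet> b + c)"
  shows "\<exists>e. \<phi> = aff b e"
proof -
  define r where "r x = real_of_ereal (\<phi> x)" for x
  have fin: "\<phi> x = ereal (r x)" for x
    using le[of x] Cvx_finite_below[OF C, of x] unfolding r_def
    by (cases "\<phi> x") auto
  have cv: "convex (epi \<phi>)" using C by (simp add: Cvx_def)
  have rconv: "r ((1-u) *\<^sub>R x + u *\<^sub>R y) \<le> (1-u) * r x + u * r y" if "0 \<le> u" "u \<le> 1" for u x y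
  proof -
    have "(x, r x) \<in> epi \<phi>" "(y, r y) \<in> epi \<phi>" using fin by (auto simp: epi_def)
    from convexD[OF cv this, of "1-u" u] that
    have "((1-u) *\<^sub>R x + u *\<^sub>R y, (1-u) * r x + u * r y) \<in> epi \<phi>" by simp
    thus ?thesis using fin by (simp add: epi_def)
  qed
  define k where "k x = r x - x \<bullet> b" for x
  have kconv: "k ((1-u) *\<^sub>R x + u *\<^sub>R y) \<le> (1-u) * k x + u * k y" if "0 \<le> u" "u \<le> 1" for u x y
    using rconv[OF that, of x y] unfolding k_def by (simp add: inner_add_left algebra_simps)
  have kb: "k x \<le> c" for x using le[of x] fin[of x] unfolding k_def by simp
  have h: "k x = k 0" for x
    using convex_bounded_const[OF kconv kb, of x 0] convex_bounded_const[OF kconv kb, of 0 x] by simp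
  have "r x = x \<bullet> b + k 0" for x using h[of x] unfolding k_def[of x] by linarith
  hence "\<phi> = aff b (k 0)" unfolding aff_def using fin by (auto simp: fun_eq_iff)
  thus ?thesis by blast
qed



locale TT =
  fixes T :: "(real^'n \<Rightarrow> ereal) \<Rightarrow> (real^'n \<Rightarrow> ereal)"
  assumes maps: "\<And>\<phi>. \<phi> \<in> Cvx \<Longrightarrow> T \<phi> \<in> Cvx"
    and order: "\<And>\<phi> \<psi>. \<phi> \<in> Cvx \<Longrightarrow> \<psi> \<in> Cvx \<Longrightarrow> (\<phi> \<le> \<psi> \<longleftrightarrow> T \<phi> \<le> T \<psi>)"
    and homog: "\<And>\<phi>. \<phi> \<in> Cvx \<Longrightarrow> pos_homogeneous \<phi> \<Longrightarrow> T \<phi> = \<phi>"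
    and sums: "\<And>\<phi>' \<psi>'. \<phi>' \<in> ImT T \<Longrightarrow> \<psi>' \<in> ImT T \<Longrightarrow> (\<exists>x. \<phi>' x + \<psi>' x \<noteq> \<infinity>)
                 \<Longrightarrow> (\<lambda>x. \<phi>' x + \<psi>' x) \<in> ImT T"
begin

lemma inj: "\<phi> \<in> Cvx \<Longrightarrow> \<psi> \<in> Cvx \<Longrightarrow> T \<phi> = T \<psi> \<Longrightarrow> \<phi> = \<psi>"
  using order by (metis order_antisym order_refl)

lemma ImT_T: "\<phi> \<in> Cvx \<Longrightarrow> T \<phi> \<in> ImT T" by (simp add: ImT_def)

lemma sum_pre:
  assumes "\<phi>1 \<in> Cvx" "\<phi>2 \<in> Cvx" "T \<phi>1 x + T \<phi>2 x \<noteq> \<infinity>"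
  shows "\<exists>\<psi>\<in>Cvx. T \<psi> = (\<lambda>x. T \<phi>1 x + T \<phi>2 x)"
proof -
  have "(\<lambda>x. T \<phi>1 x + T \<phi>2 x) \<in> T ` Cvx"
    using sums[OF ImT_T[OF assms(1)] ImT_T[OF assms(2)]] assms(3) unfolding ImT_def by blast
  thus ?thesis by (metis imageE)
qed

lemma max_lin_fixed: "T (\<lambda>x. max (aff a 0 x) (aff b 0 x)) = (\<lambda>x. max (aff a 0 x) (aff b 0 x))"
proof (rule homog[OF max_aff_Cvx])
  have e: "max (ereal (t * p)) (ereal (t * q)) = ereal t * max (ereal p) (ereal q)" if "t > 0" for t p q :: real
    using that by (auto simp: max_def mult_left_mono)
  show "pos_homogeneous (\<lambda>x. max (aff a 0 x) (aff b 0 x))"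
    unfolding pos_homogeneous_def aff_def by (simp add: e)
qed

lemma lin_fixed: "T (aff a 0) = aff a 0"
  using max_lin_fixed[of a a] by simp

lemma Tle: "\<phi> \<in> Cvx \<Longrightarrow> \<psi> \<in> Cvx \<Longrightarrow> \<phi> \<le> \<psi> \<Longrightarrow> T \<phi> \<le> T \<psi>" using order by blast
lemma Tle_rev: "\<phi> \<in> Cvx \<Longrightarrow> \<psi> \<in> Cvx \<Longrightarrow> T \<phi> \<le> T \<psi> \<Longrightarrow> \<phi> \<le> \<psi>" using order by blast

lemma aff_neg: "c \<le> 0 \<Longrightarrow> \<exists>e. T (aff a c) = aff a e"
proof -
  assume c: "c \<le> 0"
  have "T (aff a c) \<le> aff a 0" using Tle[OF aff_Cvx aff_Cvx, of a c a 0] c lin_fixed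
    by (simp add: aff_le_iff)
  hence "T (aff a c) x \<le> ereal (x \<bullet> a + 0)" for x by (simp add: le_fun_def aff_def)
  thus ?thesis using Cvx_le_aff[OF maps[OF aff_Cvx]] by blast
qed

lemma aff_all: "\<exists>e. T (aff a c) = aff a e"
proof (cases "c \<le> 0")
  case True then show ?thesis using aff_neg by blast
next
  case False
  obtain e0 where e0: "T (aff 0 (-1)) = aff 0 e0" using aff_neg[of "-1" 0] by auto
  have "aff 0 e0 \<le> aff 0 0" using Tle[OF aff_Cvx aff_Cvx, of 0 "-1" 0 0] e0 lin_fixed
    by (simp add: aff_le_iff)
  hence "e0 \<le> 0" by (simp add: aff_le_iff)
  moreover have "e0 \<noteq> 0" using inj[OF aff_Cvx aff_Cvx, of 0 "-1" 0 0] e0 lin_fixed by (auto simp: aff_eq_iff)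
  ultimately have e0n: "e0 < 0" by simp
  define g where "g = T (aff a c)"
  have gC: "g \<in> Cvx" unfolding g_def by (rule maps[OF aff_Cvx])
  then obtain x0 where x0: "g x0 \<noteq> \<infinity>" by (auto simp: Cvx_def)
  then obtain r0 where r0: "g x0 = ereal r0" using Cvx_finite_below[OF gC, of x0] by (cases "g x0") auto
  have ind: "\<exists>\<psi>\<in>Cvx. T \<psi> = (\<lambda>x. g x + ereal (real k * e0))" for k :: nat
  proof (induction k)
    case 0 show ?case using aff_Cvx unfolding g_def by (auto simp: zero_ereal_def[symmetric])
  next
    case (Suc k)
    then obtain \<psi> where \<psi>: "\<psi> \<in> Cvx" "T \<psi> = (\<lambda>x. g x + ereal (real k * e0))" by blast
    have "T \<psi> x0 + T (aff 0 (-1)) x0 \<noteq> \<infinity>" using \<psi>(2) e0 r0 by (simp add: aff_def)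
    from sum_pre[OF \<psi>(1) aff_Cvx this] obtain \<psi>' where \<psi>': "\<psi>' \<in> Cvx"
      "T \<psi>' = (\<lambda>x. T \<psi> x + T (aff 0 (-1)) x)" by blast
    have "(\<lambda>x. T \<psi> x + T (aff 0 (-1)) x) = (\<lambda>x. g x + ereal (real (Suc k) * e0))"
    proof -
      have A: "(y::ereal) + ereal p + ereal q = y + ereal (p+q)" for y p q
        by (metis add.assoc plus_ereal.simps(1))
      have B: "T \<psi> x + T (aff 0 (-1)) x = g x + ereal (real k * e0) + ereal e0" for x
        unfolding \<psi>(2) e0 unfolding aff_def by simp
      have C: "g x + ereal (real k * e0) + ereal e0 = g x + ereal (real (Suc k) * e0)" for x
        by (subst A) (simp add: algebra_simps)
      show ?thesis using B C by auto
    qed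
    then show ?case using \<psi>' by auto
  qed
  obtain k :: nat where k: "(r0 - x0 \<bullet> a) / (-e0) < real k" using reals_Archimedean2 by blast
  hence kk: "r0 + real k * e0 < x0 \<bullet> a" using e0n by (simp add: field_simps)
  obtain \<psi> where \<psi>: "\<psi> \<in> Cvx" "T \<psi> = (\<lambda>x. g x + ereal (real k * e0))" using ind by blast
  have "T \<psi> \<le> T (aff a c)" unfolding \<psi>(2) le_fun_def
  proof
    fix x
    have "g x + ereal (real k * e0) \<le> g x + 0"
      by (rule add_left_mono) (use e0n in \<open>simp add: mult_nonneg_nonpos\<close>)
    thus "g x + ereal (real k * e0) \<le> T (aff a c) x" by (simp add: g_def)
  qed
  hence "\<psi> \<le> aff a c" using Tle_rev[OF \<psi>(1) aff_Cvx] by blast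
  hence "\<psi> x \<le> ereal (x \<bullet> a + c)" for x by (simp add: le_fun_def aff_def)
  then obtain e where e: "\<psi> = aff a e" using Cvx_le_aff[OF \<psi>(1)] by blast
  have "e < 0"
  proof (rule ccontr)
    assume "\<not> e < 0"
    hence "aff a 0 \<le> aff a e" by (simp add: aff_le_iff)
    hence "T (aff a 0) \<le> T (aff a e)" using Tle[OF aff_Cvx aff_Cvx] by blast
    hence "aff a 0 x0 \<le> T \<psi> x0" using e lin_fixed by (simp add: le_fun_def)
    hence "ereal (x0 \<bullet> a) \<le> ereal (r0 + real k * e0)" using \<psi>(2) r0 by (simp add: aff_def)
    thus False using kk by simp
  qed
  then obtain e' where e': "T (aff a e) = aff a e'" using aff_neg by fastforce
  have "g x = ereal (x \<bullet> a + (e' - real k * e0))" for x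
  proof -
    have "g x + ereal (real k * e0) = ereal (x \<bullet> a + e')"
      using \<psi>(2) e e' by (metis aff_def)
    thus ?thesis by (cases "g x") (auto simp: algebra_simps)
  qed
  hence "g = aff a (e' - real k * e0)" by (auto simp: aff_def fun_eq_iff)
  thus ?thesis unfolding g_def by blast
qed

definition f where "f a c = (SOME e. T (aff a c) = aff a e)"

lemma Tf: "T (aff a c) = aff a (f a c)"
  unfolding f_def using someI_ex[OF aff_all] .

lemma f_le_iff: "f a c \<le> f a c' \<longleftrightarrow> c \<le> c'"
  using order[OF aff_Cvx aff_Cvx, of a c a c'] by (simp add: Tf aff_le_iff)

lemma f_eq_iff: "f a c = f a c' \<longleftrightarrow> c = c'"
  using f_le_iff by (metis order_antisym order_refl)

lemma f_less_iff: "f a c < f a c' \<longleftrightarrow> c < c'"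
  using f_le_iff by (meson not_le)

lemma f0: "f a 0 = 0"
  using lin_fixed[of a] by (simp add: Tf aff_eq_iff)

lemma pre_aff:
  assumes \<psi>: "\<psi> \<in> Cvx" and eq: "T \<psi> = aff b d"
  shows "\<exists>e. \<psi> = aff b e"
proof -
  have "\<exists>c. d \<le> f b c"
  proof (rule ccontr)
    assume N: "\<not> ?thesis"
    have "aff b c \<le> \<psi>" for c
    proof -
      have "f b c \<le> d" using N by (meson not_le less_imp_le)
      hence "T (aff b c) \<le> T \<psi>" using eq by (simp add: Tf aff_le_iff)
      thus ?thesis using Tle_rev[OF aff_Cvx \<psi>] by blast
    qed
    hence "\<psi> x = \<infinity>" for x
    proof -
      assume A: "\<And>c. aff b c \<le> \<psi>"
      show ?thesis
      proof (rule ccontr)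
        assume "\<psi> x \<noteq> \<infinity>"
        then obtain r where r: "\<psi> x = ereal r" using Cvx_finite_below[OF \<psi>, of x] by (cases "\<psi> x") auto
        have "aff b (r - x \<bullet> b + 1) x \<le> \<psi> x" using A by (simp add: le_fun_def)
        thus False using r by (simp add: aff_def)
      qed
    qed
    thus False using \<psi> by (auto simp: Cvx_def)
  qed
  then obtain c where c: "d \<le> f b c" by blast
  have "T \<psi> \<le> T (aff b c)" using eq c by (simp add: Tf aff_le_iff)
  hence "\<psi> \<le> aff b c" using Tle_rev[OF \<psi> aff_Cvx] by blast
  hence "\<psi> x \<le> ereal (x \<bullet> b + c)" for x by (simp add: le_fun_def aff_def)
  thus ?thesis using Cvx_le_aff[OF \<psi>] by blast
qed

lemma sum_aff:
  assumes "\<phi>1 \<in> Cvx" "\<phi>2 \<in> Cvx" "(\<lambda>x. T \<phi>1 x + T \<phi>2 x) = aff p d"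
  shows "\<exists>e. f p e = d"
proof -
  have "T \<phi>1 0 + T \<phi>2 0 \<noteq> \<infinity>" using fun_cong[OF assms(3), of 0] by (simp add: aff_def)
  from sum_pre[OF assms(1,2) this] obtain \<psi> where \<psi>: "\<psi> \<in> Cvx" "T \<psi> = aff p d"
    using assms(3) by auto
  then obtain e where "\<psi> = aff p e" using pre_aff by blast
  thus ?thesis using \<psi> by (auto simp: Tf aff_eq_iff)
qed

lemma range_eq: "\<exists>c'. f b c' = f a c"
proof -
  have "(\<lambda>x. T (aff (b - a) 0) x + T (aff a c) x) = aff b (f a c)"
    unfolding Tf f0 unfolding aff_def by (auto simp: fun_eq_iff inner_diff_right)
  thus ?thesis using sum_aff[OF aff_Cvx aff_Cvx] by blast
qed

lemma range_add: "\<exists>c''. f 0 c'' = f 0 c + f 0 c'"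
proof -
  have "(\<lambda>x. T (aff 0 c) x + T (aff 0 c') x) = aff 0 (f 0 c + f 0 c')"
    unfolding Tf unfolding aff_def by (auto simp: fun_eq_iff)
  thus ?thesis using sum_aff[OF aff_Cvx aff_Cvx] by blast
qed

end



lemma comb_le_max: "0 \<le> (\<theta>::real) \<Longrightarrow> \<theta> \<le> 1 \<Longrightarrow> (1-\<theta>)*p + \<theta>*q \<le> max p q"
proof -
  assume t: "0 \<le> \<theta>" "\<theta> \<le> 1"
  have "(1-\<theta>)*p \<le> (1-\<theta>)*max p q" using t by (intro mult_left_mono) auto
  moreover have "\<theta>*q \<le> \<theta>*max p q" using t by (intro mult_left_mono) auto
  ultimately show ?thesis by (simp add: algebra_simps)
qed

lemma max_ereal_eq: "max (ereal p) (ereal q) = ereal (max p q)" by (simp add: max_def)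

lemma max_shift: "max 0 (q - p) + (p + d) = max p q + (d::real)" by (simp add: max_def)

lemma crossing:
  fixes a1 b1 :: "real^'n"
  assumes "a1 \<noteq> b1"
  shows "\<exists>x0. x0 \<bullet> b1 + c2 = x0 \<bullet> a1 + c1"
proof -
  define v where "v = b1 - a1"
  have vv: "v \<bullet> v > 0" using assms unfolding v_def by simp
  define x0 where "x0 = ((c1 - c2)/(v \<bullet> v)) *\<^sub>R v"
  have "x0 \<bullet> v = c1 - c2" unfolding x0_def using vv by simp
  thus ?thesis unfolding v_def by (intro exI[of _ x0]) (simp add: inner_diff_right)
qed

context TT begin

lemma aff_le_max_iff:
  assumes ab: "a1 \<noteq> b1" and th: "0 \<le> \<theta>" "\<theta> \<le> 1"
  shows "aff ((1-\<theta>) *\<^sub>R a1 + \<theta> *\<^sub>R b1) c \<le> (\<lambda>x. max (aff a1 c1 x) (aff b1 c2 x))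
         \<longleftrightarrow> c \<le> (1-\<theta>)*c1 + \<theta>*c2"
proof
  assume le: "aff ((1-\<theta>) *\<^sub>R a1 + \<theta> *\<^sub>R b1) c \<le> (\<lambda>x. max (aff a1 c1 x) (aff b1 c2 x))"
  obtain x0 where x0: "x0 \<bullet> b1 + c2 = x0 \<bullet> a1 + c1" using crossing[OF ab] by blast
  have "ereal (x0 \<bullet> ((1-\<theta>) *\<^sub>R a1 + \<theta> *\<^sub>R b1) + c) \<le> max (ereal (x0 \<bullet> a1 + c1)) (ereal (x0 \<bullet> b1 + c2))"
    using le by (simp add: le_fun_def aff_def)
  hence "x0 \<bullet> ((1-\<theta>) *\<^sub>R a1 + \<theta> *\<^sub>R b1) + c \<le> x0 \<bullet> a1 + c1" using x0 by simp
  hence "(1-\<theta>) * (x0 \<bullet> a1) + \<theta> * (x0 \<bullet> b1) + c \<le> x0 \<bullet> a1 + c1" by (simp add: inner_add_right)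
  moreover have "\<theta> * (x0 \<bullet> b1) = \<theta> * c1 + \<theta> * (x0 \<bullet> a1) - \<theta> * c2"
  proof -
    have h: "\<theta> * (x0 \<bullet> b1 + c2) = \<theta> * (x0 \<bullet> a1 + c1)" using x0 by simp
    thus ?thesis by (simp add: algebra_simps)
  qed
  ultimately show "c \<le> (1-\<theta>)*c1 + \<theta>*c2" by (simp add: algebra_simps)
next
  assume c: "c \<le> (1-\<theta>)*c1 + \<theta>*c2"
  show "aff ((1-\<theta>) *\<^sub>R a1 + \<theta> *\<^sub>R b1) c \<le> (\<lambda>x. max (aff a1 c1 x) (aff b1 c2 x))"
    unfolding le_fun_def aff_def
  proof (intro allI)
    fix x
    have "x \<bullet> ((1-\<theta>) *\<^sub>R a1 + \<theta> *\<^sub>R b1) + c \<le> (1-\<theta>) * (x \<bullet> a1 + c1) + \<theta> * (x \<bullet> b1 + c2)"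
      using c by (simp add: inner_add_right algebra_simps)
    also have "\<dots> \<le> max (x \<bullet> a1 + c1) (x \<bullet> b1 + c2)" by (rule comb_le_max[OF th])
    finally show "ereal (x \<bullet> ((1-\<theta>) *\<^sub>R a1 + \<theta> *\<^sub>R b1) + c) \<le> max (ereal (x \<bullet> a1 + c1)) (ereal (x \<bullet> b1 + c2))" by (simp only: max_ereal_eq ereal_less_eq(3))
  qed
qed

lemma Tmax_lower1: "aff a1 (f a1 c1) \<le> T (\<lambda>x. max (aff a1 c1 x) (aff b1 c2 x))"
proof -
  have "aff a1 c1 \<le> (\<lambda>x. max (aff a1 c1 x) (aff b1 c2 x))" by (simp add: le_fun_def)
  from Tle[OF aff_Cvx max_aff_Cvx this] show ?thesis by (simp only: Tf)
qed

lemma Tmax_lower2: "aff b1 (f b1 c2) \<le> T (\<lambda>x. max (aff a1 c1 x) (aff b1 c2 x))"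
proof -
  have "aff b1 c2 \<le> (\<lambda>x. max (aff a1 c1 x) (aff b1 c2 x))" by (simp add: le_fun_def)
  from Tle[OF aff_Cvx max_aff_Cvx this] show ?thesis by (simp only: Tf)
qed

lemmas Tmax_lower = Tmax_lower1 Tmax_lower2

end


context TT begin
lemma max_lemma:
  assumes ab: "a1 \<noteq> b1" and d1: "f a1 c1 = d" and d2: "f b1 c2 = d" and th: "0 \<le> \<theta>" "\<theta> \<le> 1"
    and cm: "f ((1-\<theta>) *\<^sub>R a1 + \<theta> *\<^sub>R b1) c' = d"
  shows "c' = (1-\<theta>)*c1 + \<theta>*c2"
proof -
  define m where "m = (1-\<theta>) *\<^sub>R a1 + \<theta> *\<^sub>R b1"
  define \<phi> where "\<phi> = (\<lambda>x. max (aff a1 c1 x) (aff b1 c2 x))"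
  have \<phi>C: "\<phi> \<in> Cvx" unfolding \<phi>_def by (rule max_aff_Cvx)
  define H where "H = (\<lambda>x. ereal (max (x \<bullet> a1) (x \<bullet> b1) + d))"
  have Hs: "(\<lambda>x. T (\<lambda>x. max (aff 0 0 x) (aff (b1 - a1) 0 x)) x + T (aff a1 c1) x) = H"
  proof
    fix x
    have "max (ereal (x \<bullet> 0 + 0)) (ereal (x \<bullet> (b1 - a1) + 0)) + ereal (x \<bullet> a1 + d)
          = ereal (max (x \<bullet> a1) (x \<bullet> b1) + d)"
      unfolding max_ereal_eq plus_ereal.simps(1) ereal.inject by (simp add: inner_diff_right max_def)
    thus "T (\<lambda>x. max (aff 0 0 x) (aff (b1 - a1) 0 x)) x + T (aff a1 c1) x = H x"
      unfolding max_lin_fixed Tf d1 H_def by (simp add: aff_def)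
  qed
  have "T (\<lambda>x. max (aff 0 0 x) (aff (b1 - a1) 0 x)) 0 + T (aff a1 c1) 0 \<noteq> \<infinity>"
    using fun_cong[OF Hs, of 0] by (simp add: H_def)
  from sum_pre[OF max_aff_Cvx aff_Cvx this] Hs obtain \<psi> where \<psi>: "\<psi> \<in> Cvx" "T \<psi> = H" by auto
  have t1: "T (aff a1 c1) \<le> T \<psi>" and t2: "T (aff b1 c2) \<le> T \<psi>" unfolding \<psi>(2) Tf d1 d2 H_def
    by (simp_all add: le_fun_def aff_def)
  have "aff a1 c1 \<le> \<psi>" by (rule Tle_rev[OF aff_Cvx \<psi>(1) t1])
  moreover have "aff b1 c2 \<le> \<psi>" by (rule Tle_rev[OF aff_Cvx \<psi>(1) t2])
  ultimately have "\<phi> \<le> \<psi>" unfolding \<phi>_def by (simp add: le_fun_def)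
  hence TH: "T \<phi> \<le> H" using Tle[OF \<phi>C \<psi>(1)] \<psi>(2) by simp
  have key: "f m c \<le> d \<longleftrightarrow> c \<le> (1-\<theta>)*c1 + \<theta>*c2" for c
  proof -
    have "f m c \<le> d \<longleftrightarrow> aff m c \<le> \<phi>"
    proof
      assume fm: "f m c \<le> d"
      have "T (aff m c) \<le> T \<phi>" unfolding le_fun_def Tf
      proof
        fix x
        have "ereal (x \<bullet> m + f m c) \<le> ereal (max (x \<bullet> a1) (x \<bullet> b1) + d)"
        proof -
          have "x \<bullet> m = (1-\<theta>)*(x \<bullet> a1) + \<theta>*(x \<bullet> b1)" unfolding m_def by (simp add: inner_add_right)
          thus ?thesis using fm comb_le_max[OF th, of "x \<bullet> a1" "x \<bullet> b1"] by simp
        qed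
        also have "\<dots> = max (ereal (x \<bullet> a1 + d)) (ereal (x \<bullet> b1 + d))"
          by (simp only: max_ereal_eq ereal.inject max_add_distrib_left)
        also have "\<dots> \<le> T \<phi> x" using Tmax_lower1[of a1 c1 b1 c2] Tmax_lower2[of b1 c2 a1 c1] d1 d2 unfolding \<phi>_def
          by (simp add: le_fun_def aff_def)
        finally show "aff m (f m c) x \<le> T \<phi> x" by (simp add: aff_def)
      qed
      thus "aff m c \<le> \<phi>" by (rule Tle_rev[OF aff_Cvx \<phi>C])
    next
      assume "aff m c \<le> \<phi>"
      hence "T (aff m c) \<le> H" using Tle[OF aff_Cvx \<phi>C] TH by (meson order_trans)
      hence "T (aff m c) 0 \<le> H 0" by (simp add: le_fun_def)
      hence "aff m (f m c) 0 \<le> H 0" by (simp only: Tf)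
      thus "f m c \<le> d" by (simp add: aff_def H_def)
    qed
    also have "\<dots> \<longleftrightarrow> c \<le> (1-\<theta>)*c1 + \<theta>*c2"
      unfolding m_def \<phi>_def by (rule aff_le_max_iff[OF ab th])
    finally show ?thesis .
  qed
  have "c' \<le> (1-\<theta>)*c1 + \<theta>*c2" using key[of c'] cm m_def by simp
  moreover have "f m ((1-\<theta>)*c1 + \<theta>*c2) \<le> f m c'" using key[of "(1-\<theta>)*c1 + \<theta>*c2"] cm m_def by simp
  hence "(1-\<theta>)*c1 + \<theta>*c2 \<le> c'" by (simp add: f_le_iff)
  ultimately show ?thesis by simp
qed

end


context TT begin

lemma f_indep: "f a c = f 0 c"
proof (cases "a = 0")
  case True then show ?thesis by simp
next
  case False
  define d where "d = f 0 c"
  define \<kappa> where "\<kappa> t = (SOME c'. f (t *\<^sub>R a) c' = d)" for t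
  have \<kappa>: "f (t *\<^sub>R a) (\<kappa> t) = d" for t
    unfolding \<kappa>_def d_def by (rule someI_ex[OF range_eq])
  have aff: "\<kappa>((1-\<theta>) * s + \<theta>*t) = (1-\<theta>)*\<kappa> s + \<theta>*\<kappa> t" if th: "0 \<le> \<theta>" "\<theta> \<le> 1" for s t \<theta>
  proof (cases "s = t")
    case True then show ?thesis by (simp add: algebra_simps)
  next
    case st: False
    have ne: "s *\<^sub>R a \<noteq> t *\<^sub>R a" using st False by simp
    have v: "(1-\<theta>) *\<^sub>R (s *\<^sub>R a) + \<theta> *\<^sub>R (t *\<^sub>R a) = ((1-\<theta>) * s + \<theta>*t) *\<^sub>R a"
      by (simp add: scaleR_add_left)
    have cm: "f ((1-\<theta>) *\<^sub>R (s *\<^sub>R a) + \<theta> *\<^sub>R (t *\<^sub>R a)) (\<kappa>((1-\<theta>) * s + \<theta>*t)) = d"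
      unfolding v by (rule \<kappa>)
    show ?thesis by (rule max_lemma[OF ne \<kappa> \<kappa> th cm])
  qed
  have form: "\<kappa> t = \<kappa> 0 + t * (\<kappa> 1 - \<kappa> 0)" for t by (rule affine_formula[OF aff])
  have k0: "\<kappa> 0 = c" using \<kappa>[of 0] unfolding d_def by (simp add: f_eq_iff)
  have k1: "\<kappa> 1 = \<kappa> 0"
  proof (rule ccontr)
    assume ne: "\<kappa> 1 \<noteq> \<kappa> 0"
    show False
    proof (cases "0 \<le> c")
      case True
      hence "0 \<le> d" unfolding d_def using f_le_iff[of 0 0 c] f0[of 0] by simp
      hence "0 \<le> \<kappa> t" for t using \<kappa>[of t] f_le_iff[of "t *\<^sub>R a" 0 "\<kappa> t"] f0[of "t *\<^sub>R a"] by simp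
      moreover have "\<kappa> (-(\<kappa> 0 + 1)/(\<kappa> 1 - \<kappa> 0)) = -1"
      proof -
        have nz: "\<kappa> 1 - \<kappa> 0 \<noteq> 0" using ne by simp
        have "(-(\<kappa> 0 + 1)/(\<kappa> 1 - \<kappa> 0)) * (\<kappa> 1 - \<kappa> 0) = -(\<kappa> 0 + 1)" using nz by simp
        thus ?thesis using form[of "-(\<kappa> 0 + 1)/(\<kappa> 1 - \<kappa> 0)"] by simp
      qed
      ultimately show False by (metis add.inverse_neutral neg_le_iff_le not_one_le_zero)
    next
      case False
      hence "d \<le> 0" unfolding d_def using f_le_iff[of 0 c 0] f0[of 0] by simp
      hence "\<kappa> t \<le> 0" for t using \<kappa>[of t] f_le_iff[of "t *\<^sub>R a" "\<kappa> t" 0] f0[of "t *\<^sub>R a"] by simp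
      moreover have "\<kappa> ((1 - \<kappa> 0)/(\<kappa> 1 - \<kappa> 0)) = 1"
      proof -
        have nz: "\<kappa> 1 - \<kappa> 0 \<noteq> 0" using ne by simp
        have "((1 - \<kappa> 0)/(\<kappa> 1 - \<kappa> 0)) * (\<kappa> 1 - \<kappa> 0) = 1 - \<kappa> 0" using nz by simp
        thus ?thesis using form[of "(1 - \<kappa> 0)/(\<kappa> 1 - \<kappa> 0)"] by simp
      qed
      ultimately show False by (metis not_le zero_less_one)
    qed
  qed
  show ?thesis using \<kappa>[of 1] k1 k0 unfolding d_def by simp
qed

end



context TT begin

definition u where "u c = f 0 c"

lemma Tu: "T (aff a c) = aff a (u c)" unfolding u_def Tf f_indep[of a c] ..
lemma u_le_iff: "u c \<le> u c' \<longleftrightarrow> c \<le> c'" unfolding u_def by (rule f_le_iff)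
lemma u_less_iff: "u c < u c' \<longleftrightarrow> c < c'" unfolding u_def by (rule f_less_iff)
lemma u_eq_iff: "u c = u c' \<longleftrightarrow> c = c'" unfolding u_def by (rule f_eq_iff)
lemma u0: "u 0 = 0" unfolding u_def by (rule f0)
lemma u_add: "\<exists>c''. u c'' = u c + u c'" unfolding u_def by (rule range_add)

definition bvec :: "real^'n" where "bvec = axis undefined 1"
lemma bvec_ne: "bvec \<noteq> 0" unfolding bvec_def by simp

lemma Tmax_u1: "aff 0 (u c1) \<le> T (\<lambda>x. max (aff 0 c1 x) (aff b c2 x))"
  using Tmax_lower1[of 0 c1 b c2] by (simp add: u_def)
lemma Tmax_u2: "aff b (u c2) \<le> T (\<lambda>x. max (aff 0 c1 x) (aff b c2 x))"
  using Tmax_lower2[of b c2 0 c1] unfolding u_def f_indep[of b c2] .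

lemma aff_le_max_0:
  assumes "0 \<le> \<theta>" "\<theta> \<le> 1"
    and "aff (\<theta> *\<^sub>R bvec) k \<le> (\<lambda>x. max (aff 0 c1 x) (aff bvec c2 x))"
  shows "k \<le> (1-\<theta>)*c1 + \<theta>*c2"
  using aff_le_max_iff[of 0 bvec \<theta> k c1 c2] bvec_ne assms by simp

lemma W_u:
  assumes th: "0 \<le> \<theta>" "\<theta> \<le> 1" and le: "u k \<le> (1-\<theta>)*u c1 + \<theta>*u c2"
  shows "k \<le> (1-\<theta>)*c1 + \<theta>*c2"
proof -
  define \<phi> where "\<phi> = (\<lambda>x. max (aff 0 c1 x) (aff bvec c2 x))"
  have \<phi>C: "\<phi> \<in> Cvx" unfolding \<phi>_def by (rule max_aff_Cvx)
  have "T (aff (\<theta> *\<^sub>R bvec) k) \<le> T \<phi>" unfolding Tu le_fun_def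
  proof
    fix x
    have "x \<bullet> (\<theta> *\<^sub>R bvec) + u k \<le> (1-\<theta>)*(u c1) + \<theta>*(x \<bullet> bvec + u c2)"
      using le by (simp add: algebra_simps)
    also have "\<dots> \<le> max (u c1) (x \<bullet> bvec + u c2)" by (rule comb_le_max[OF th])
    finally have "ereal (x \<bullet> (\<theta> *\<^sub>R bvec) + u k) \<le> max (ereal (x \<bullet> 0 + u c1)) (ereal (x \<bullet> bvec + u c2))"
      by (simp only: max_ereal_eq ereal_less_eq(3) inner_zero_right add_0_left)
    also have "\<dots> \<le> T \<phi> x" using Tmax_u1[of c1 bvec c2] Tmax_u2[of bvec c2 c1] unfolding \<phi>_def
      by (simp add: le_fun_def aff_def)
    finally show "aff (\<theta> *\<^sub>R bvec) (u k) x \<le> T \<phi> x" by (simp add: aff_def)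
  qed
  hence "aff (\<theta> *\<^sub>R bvec) k \<le> \<phi>" by (rule Tle_rev[OF aff_Cvx \<phi>C])
  thus ?thesis using aff_le_max_0[OF th] unfolding \<phi>_def by blast
qed

lemma u_concave:
  "0 \<le> \<theta> \<Longrightarrow> \<theta> \<le> 1 \<Longrightarrow> (1-\<theta>)*u c1 + \<theta>*u c2 \<le> u((1-\<theta>)*c1 + \<theta>*c2)"
  by (rule concave_from_W[of u]) (auto simp: u_less_iff W_u)

end



context TT begin

lemma u_cont: "continuous_on UNIV u"
proof -
  have "convex_on UNIV (\<lambda>x. - u x)" unfolding convex_on_def
  proof (intro conjI convex_UNIV ballI allI impI)
    fix x y :: real and a b :: real
    assume ab: "0 \<le> a" "0 \<le> b" "a + b = 1"
    hence "(1-b)*u x + b*u y \<le> u((1-b)*x + b*y)" by (intro u_concave) auto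
    moreover have "1 - b = a" using ab by simp
    ultimately show "- u (a *\<^sub>R x + b *\<^sub>R y) \<le> a * - u x + b * - u y" by simp
  qed
  from convex_on_continuous[OF open_UNIV this] have "continuous_on UNIV (\<lambda>x. - u x)" .
  from continuous_on_minus[OF this] show ?thesis by simp
qed

lemma u_mult: "\<exists>c. u c = real n * u v"
proof (induction n)
  case 0 show ?case using u0 by auto
next
  case (Suc n)
  then obtain c where c: "u c = real n * u v" by blast
  obtain c'' where "u c'' = u c + u v" using u_add by blast
  thus ?case using c by (auto simp: algebra_simps)
qed

lemma u_surj: "\<exists>c. u c = y"
proof -
  have p: "u 1 > 0" using u_less_iff[of 0 1] u0 by simp
  have n: "u (-1) < 0" using u_less_iff[of "-1" 0] u0 by simp
  obtain N :: nat where "y / u 1 < real N" using reals_Archimedean2 by blast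
  hence "y < real N * u 1" using p by (simp add: field_simps)
  then obtain c2 where c2: "y \<le> u c2" using u_mult[of N 1] by (metis less_imp_le)
  obtain M :: nat where "(-y) / (- u (-1)) < real M" using reals_Archimedean2 by blast
  hence "real M * u (-1) < y" using n by (simp add: field_simps)
  then obtain c1 where c1: "u c1 \<le> y" using u_mult[of M "-1"] by (metis less_imp_le)
  have "c1 \<le> c2" using c1 c2 u_le_iff by (meson order_trans)
  from IVT'[of u c1 y c2, OF c1 c2 this continuous_on_subset[OF u_cont]] show ?thesis by auto
qed

definition kap where "kap e c = (SOME c''. u c'' = u c + u e)"

lemma kap: "u (kap e c) = u c + u e"
  unfolding kap_def by (rule someI_ex[OF u_add])

lemma kap_less: "x < y \<Longrightarrow> kap e x < kap e y"
  using kap[of e x] kap[of e y] u_less_iff[of x y] u_less_iff[of "kap e x" "kap e y"] by simp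

lemma kap_le: "x \<le> y \<Longrightarrow> kap e x \<le> kap e y"
  using kap_less by (metis order_le_less)

lemma W_e:
  assumes th: "0 \<le> \<theta>" "\<theta> \<le> 1" and le: "kap e k \<le> (1-\<theta>)*kap e c1 + \<theta>*kap e c2"
  shows "k \<le> (1-\<theta>)*c1 + \<theta>*c2"
proof -
  define \<phi> where "\<phi> = (\<lambda>x. max (aff 0 c1 x) (aff bvec c2 x))"
  have \<phi>C: "\<phi> \<in> Cvx" unfolding \<phi>_def by (rule max_aff_Cvx)
  obtain x0 where x0: "T \<phi> x0 \<noteq> \<infinity>" using maps[OF \<phi>C] by (auto simp: Cvx_def)
  have Te: "T (aff 0 e) x = ereal (u e)" for x unfolding Tu by (simp add: aff_def)
  have "T \<phi> x0 + T (aff 0 e) x0 \<noteq> \<infinity>" using x0 Te[of x0] by simp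
  from sum_pre[OF \<phi>C aff_Cvx this] obtain \<psi> where \<psi>: "\<psi> \<in> Cvx"
    "T \<psi> = (\<lambda>x. T \<phi> x + T (aff 0 e) x)" by blast
  have T\<psi>: "T \<psi> x = T \<phi> x + ereal (u e)" for x using \<psi>(2) Te by simp
  have lb1: "ereal (u c1) \<le> T \<phi> x" for x
    using Tmax_u1[of c1 bvec c2] unfolding \<phi>_def by (simp add: le_fun_def aff_def)
  have lb2: "ereal (x \<bullet> bvec + u c2) \<le> T \<phi> x" for x
    using Tmax_u2[of bvec c2 c1] unfolding \<phi>_def by (simp add: le_fun_def aff_def)
  have "T (aff 0 (kap e c1)) \<le> T \<psi>" unfolding Tu le_fun_def
  proof
    fix x
    have "ereal (u c1) + ereal (u e) \<le> T \<phi> x + ereal (u e)" by (rule add_right_mono[OF lb1])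
    thus "aff 0 (u (kap e c1)) x \<le> T \<psi> x" unfolding T\<psi> kap by (simp add: aff_def)
  qed
  hence g1: "aff 0 (kap e c1) \<le> \<psi>" by (rule Tle_rev[OF aff_Cvx \<psi>(1)])
  have "T (aff bvec (kap e c2)) \<le> T \<psi>" unfolding Tu le_fun_def
  proof
    fix x
    have "ereal (x \<bullet> bvec + u c2) + ereal (u e) \<le> T \<phi> x + ereal (u e)" by (rule add_right_mono[OF lb2])
    thus "aff bvec (u (kap e c2)) x \<le> T \<psi> x" unfolding T\<psi> kap by (simp add: aff_def algebra_simps)
  qed
  hence g2: "aff bvec (kap e c2) \<le> \<psi>" by (rule Tle_rev[OF aff_Cvx \<psi>(1)])
  have "aff (\<theta> *\<^sub>R bvec) (kap e k) \<le> \<psi>" unfolding le_fun_def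
  proof
    fix x
    have "x \<bullet> (\<theta> *\<^sub>R bvec) + kap e k \<le> (1-\<theta>)*(kap e c1) + \<theta>*(x \<bullet> bvec + kap e c2)"
      using le by (simp add: algebra_simps)
    also have "\<dots> \<le> max (kap e c1) (x \<bullet> bvec + kap e c2)" by (rule comb_le_max[OF th])
    finally have "ereal (x \<bullet> (\<theta> *\<^sub>R bvec) + kap e k) \<le> max (ereal (x \<bullet> 0 + kap e c1)) (ereal (x \<bullet> bvec + kap e c2))"
      by (simp only: max_ereal_eq ereal_less_eq(3) inner_zero_right add_0_left)
    also have "\<dots> \<le> \<psi> x" using g1 g2 by (simp add: le_fun_def aff_def)
    finally show "aff (\<theta> *\<^sub>R bvec) (kap e k) x \<le> \<psi> x" by (simp add: aff_def)
  qed
  hence "T (aff (\<theta> *\<^sub>R bvec) (kap e k)) \<le> T \<psi>" by (rule Tle[OF aff_Cvx \<psi>(1)])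
  hence "T (aff (\<theta> *\<^sub>R bvec) k) \<le> T \<phi>" unfolding Tu le_fun_def
  proof (intro allI)
    fix x
    assume A: "\<forall>x. aff (\<theta> *\<^sub>R bvec) (u (kap e k)) x \<le> T \<psi> x"
    have "ereal (x \<bullet> (\<theta> *\<^sub>R bvec) + u k) + ereal (u e) \<le> T \<phi> x + ereal (u e)"
      using A[rule_format, of x] unfolding T\<psi> kap by (simp add: aff_def algebra_simps)
    thus "aff (\<theta> *\<^sub>R bvec) (u k) x \<le> T \<phi> x"
      unfolding ereal_add_le_add_iff2 by (simp add: aff_def)
  qed
  hence "aff (\<theta> *\<^sub>R bvec) k \<le> \<phi>" by (rule Tle_rev[OF aff_Cvx \<phi>C])
  thus ?thesis using aff_le_max_0[OF th] unfolding \<phi>_def by blast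
qed

lemma kap_concave:
  "0 \<le> \<theta> \<Longrightarrow> \<theta> \<le> 1 \<Longrightarrow> (1-\<theta>)*kap e c1 + \<theta>*kap e c2 \<le> kap e ((1-\<theta>)*c1 + \<theta>*c2)"
  by (rule concave_from_W[of "kap e"]) (auto simp: kap_less W_e)

lemma u_additive: "u (c + e) = u c + u e"
proof -
  obtain e' where e': "u e' = - u e" using u_surj by blast
  have inv1: "kap e' (kap e c) = c" for c
    using kap[of e' "kap e c"] kap[of e c] e' u_eq_iff by simp
  have inv2: "kap e (kap e' c) = c" for c
    using kap[of e "kap e' c"] kap[of e' c] e' u_eq_iff by simp
  have affk: "kap e ((1-\<theta>) * s + \<theta>*t) = (1-\<theta>) * kap e s + \<theta> * kap e t" if th: "0 \<le> \<theta>" "\<theta> \<le> 1" for s t \<theta>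
  proof (rule order_antisym)
    show "(1-\<theta>) * kap e s + \<theta> * kap e t \<le> kap e ((1-\<theta>) * s + \<theta>*t)" by (rule kap_concave[OF th])
    have "(1-\<theta>) * kap e' (kap e s) + \<theta> * kap e' (kap e t) \<le> kap e' ((1-\<theta>) * kap e s + \<theta> * kap e t)"
      by (rule kap_concave[OF th])
    hence "(1-\<theta>) * s + \<theta>*t \<le> kap e' ((1-\<theta>) * kap e s + \<theta> * kap e t)" by (simp add: inv1)
    from kap_le[OF this, of e] show "kap e ((1-\<theta>) * s + \<theta>*t) \<le> (1-\<theta>) * kap e s + \<theta> * kap e t"
      by (simp add: inv2)
  qed
  have form: "kap e t = kap e 0 + t * (kap e 1 - kap e 0)" for t by (rule affine_formula[OF affk])
  have k0: "kap e 0 = e" using kap[of e 0] u0 u_eq_iff by simp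
  show ?thesis
  proof (cases "e = 0")
    case True then show ?thesis using u0 by simp
  next
    case False
    have a1: "kap e 1 - kap e 0 = 1"
    proof (rule ccontr)
      define \<alpha> where "\<alpha> = kap e 1 - kap e 0"
      assume "kap e 1 - kap e 0 \<noteq> 1"
      hence na: "1 - \<alpha> \<noteq> 0" unfolding \<alpha>_def by simp
      define cs where "cs = e / (1 - \<alpha>)"
      have "kap e cs = e + cs * \<alpha>" using form[of cs] k0 unfolding \<alpha>_def by simp
      also have "\<dots> = cs" unfolding cs_def using na by (simp add: field_simps)
      finally have "u cs = u cs + u e" using kap[of e cs] by simp
      hence "u e = u 0" using u0 by simp
      thus False using False u_eq_iff by simp
    qed
    have "kap e c = c + e" using form[of c] k0 a1 by simp
    thus ?thesis using kap[of e c] by simp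
  qed
qed

lemma u_linear: "u c = u 1 * c"
  by (rule concave_additive_linear[of u]) (auto intro: u_concave u_additive)

end

theorem mainTheorem5_loc:
  fixes T :: "(real^'n \<Rightarrow> ereal) \<Rightarrow> (real^'n \<Rightarrow> ereal)"
  assumes "TT T"
  shows "\<exists>\<gamma>::real. \<gamma> > 0 \<and> (\<forall>(a::real^'n) (c::real).
           T (\<lambda>x. ereal (x \<bullet> a + c)) = (\<lambda>x. ereal (x \<bullet> a + \<gamma> * c)))"
proof -
  interpret TT T by (rule assms)
  have "u 1 > 0" using u_less_iff[of 0 1] u0 by simp
  moreover have "T (\<lambda>x. ereal (x \<bullet> a + c)) = (\<lambda>x. ereal (x \<bullet> a + u 1 * c))" for a c
    using Tu[of a c] u_linear[of c] unfolding aff_def by simp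
  ultimately show ?thesis by blast
qed

theorem mainTheorem5:
  fixes T :: "(real^'n \<Rightarrow> ereal) \<Rightarrow> (real^'n \<Rightarrow> ereal)"
  assumes maps: "\<And>\<phi>. \<phi> \<in> Cvx \<Longrightarrow> T \<phi> \<in> Cvx"
    and order: "\<And>\<phi> \<psi>. \<phi> \<in> Cvx \<Longrightarrow> \<psi> \<in> Cvx \<Longrightarrow> (\<phi> \<le> \<psi> \<longleftrightarrow> T \<phi> \<le> T \<psi>)"
    and homog: "\<And>\<phi>. \<phi> \<in> Cvx \<Longrightarrow> pos_homogeneous \<phi> \<Longrightarrow> T \<phi> = \<phi>"
    and sums: "\<And>\<phi>' \<psi>'. \<phi>' \<in> ImT T \<Longrightarrow> \<psi>' \<in> ImT T \<Longrightarrow> (\<exists>x. \<phi>' x + \<psi>' x \<noteq> \<infinity>)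
                 \<Longrightarrow> (\<lambda>x. \<phi>' x + \<psi>' x) \<in> ImT T"
  shows "\<exists>\<gamma>::real. \<gamma> > 0 \<and> (\<forall>(a::real^'n) (c::real).
           T (\<lambda>x. ereal (x \<bullet> a + c)) = (\<lambda>x. ereal (x \<bullet> a + \<gamma> * c)))"
proof -
  have "TT T" by (rule TT.intro[OF maps order homog sums])
  thus ?thesis by (rule mainTheorem5_loc)
qed

end
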